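(* Let $V$ be a $2n$-dimensional real vector space and let $\omega,\Omega$ be two symplectic (nondegenerate alternating bilinear) forms on $V$. If the set of Lagrangian subspaces of $V$ with respect to $\omega$ coincides with the set of Lagrangian subspaces with respect to $\Omega$, then there is a constant $c\neq0$ with $\Omega=c\,\omega$.
   Context: A Lagrangian subspace of a $2n$-dimensional symplectic vector space $(V,\omega)$ is an $n$-dimensional subspace on which $\omega$ vanishes identically. *)

theory Defs
  imports "HOL-Analysis.Analysis"
begin

definition symplectic_form :: "('v::euclidean_space \<Rightarrow> 'v \<Rightarrow> real) \<Rightarrow> bool" where
  "symplectic_form w \<longleftrightarrow>
     bilinear w \<and> (\<forall>x. w x x = 0) \<and> (\<forall>x. (\<forall>y. w x y = 0) \<longrightarrow> x = 0)"

definition lagrangian :: "nat \<Rightarrow> ('v::euclidean_space \<Rightarrow> 'v \<Rightarrow> real) \<Rightarrow> 'v set \<Rightarrow> bool" where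
  "lagrangian n w L \<longleftrightarrow> subspace L \<and> dim L = n \<and> (\<forall>x\<in>L. \<forall>y\<in>L. w x y = 0)"

end

theory Submission
  imports Defs
begin

lemma rep:
  fixes w :: "'v::euclidean_space \<Rightarrow> 'v \<Rightarrow> real"
  assumes "bilinear w"
  shows "\<exists>g. linear g \<and> (\<forall>u v. w u v = g u \<bullet> v)"
proof -
  define g where "g u = (\<Sum>b\<in>Basis. w u b *\<^sub>R b)" for u
  have lin: "linear g"
    unfolding g_def using assms
    by (intro linearI) (auto simp: bilinear_ladd bilinear_lmul scaleR_add_left sum.distrib scaleR_sum_right)
  have "w u v = g u \<bullet> v" for u v
  proof -
    have "w u v = w u (\<Sum>b\<in>Basis. (v \<bullet> b) *\<^sub>R b)" by (simp add: euclidean_representation)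
    also have "\<dots> = (\<Sum>b\<in>Basis. (v \<bullet> b) * w u b)"
      using assms by (simp add: bilinear_def real_vector.linear_sum linear_cmul)
    also have "\<dots> = g u \<bullet> v" unfolding g_def by (simp add: inner_sum_right mult.commute inner_commute)
    finally show ?thesis .
  qed
  with lin show ?thesis by blast
qed

lemma perp_dim:
  fixes w :: "'v::euclidean_space \<Rightarrow> 'v \<Rightarrow> real"
  assumes "symplectic_form w" "subspace W"
  shows "dim {v. \<forall>u\<in>W. w u v = 0} + dim W = DIM('v)"
proof -
  from assms(1) have bw: "bilinear w" and nd: "\<And>x. (\<forall>y. w x y = 0) \<Longrightarrow> x = 0"
    unfolding symplectic_form_def by auto
  obtain g where g: "linear g" "\<And>u v. w u v = g u \<bullet> v" using rep[OF bw] by blast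
  have inj: "inj g"
  proof (rule injI)
    fix x y assume "g x = g y"
    then have "\<forall>v. w (x - y) v = 0" using g by (simp add: linear_diff)
    then show "x = y" using nd by fastforce
  qed
  have sA: "subspace (g ` W)" by (rule real_vector.linear_subspace_image[OF g(1) assms(2)])
  have dA: "dim (g ` W) = dim W"
    using g(1) inj by (simp add: eucl.dim_image_eq inj_on_subset)
  have "{v. \<forall>u\<in>W. w u v = 0} = {y \<in> UNIV. \<forall>x \<in> g ` W. orthogonal x y}"
    by (auto simp: g orthogonal_def)
  moreover have "dim {y \<in> UNIV. \<forall>x \<in> g ` W. orthogonal x y} + dim (g ` W) = dim (UNIV::'v set)"
    by (rule dim_subspace_orthogonal_to_vectors) (use sA in auto)
  ultimately show ?thesis using dA by simp
qed

lemma antisym_form: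
  fixes w :: "'v::euclidean_space \<Rightarrow> 'v \<Rightarrow> real"
  assumes "bilinear w" "\<forall>x. w x x = 0"
  shows "w x y = - w y x"
proof -
  have "w (x + y) (x + y) = w x x + w x y + (w y x + w y y)"
    by (simp add: bilinear_ladd[OF assms(1)] bilinear_radd[OF assms(1)])
  then have "w x y + w y x = 0" using assms(2) by simp
  then show ?thesis by linarith
qed

lemma iso_span:
  fixes w :: "'v::euclidean_space \<Rightarrow> 'v \<Rightarrow> real"
  assumes bw: "bilinear w" and iso: "\<forall>x\<in>S. \<forall>y\<in>S. w x y = 0"
  shows "\<forall>x\<in>span S. \<forall>y\<in>span S. w x y = 0"
proof -
  have sl: "subspace {x. w x y = 0}" for y
    using bw by (auto simp: subspace_def bilinear_ladd bilinear_lmul bilinear_lzero)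
  have sr: "subspace {y. w x y = 0}" for x
    using bw by (auto simp: subspace_def bilinear_radd bilinear_rmul bilinear_rzero)
  have 1: "\<forall>x\<in>span S. w x y = 0" if "y \<in> S" for y
  proof
    fix x assume "x \<in> span S"
    then show "w x y = 0"
      by (rule span_induct) (use iso that sl in auto)
  qed
  show ?thesis
  proof (intro ballI)
    fix x y assume x: "x \<in> span S" and "y \<in> span S"
    then show "w x y = 0"
      by (rule_tac span_induct[of y S "\<lambda>y. w x y = 0"]) (use 1 sr in auto)
  qed
qed

lemma extend:
  fixes w :: "'v::euclidean_space \<Rightarrow> 'v \<Rightarrow> real"
  assumes sw: "symplectic_form w" and D: "DIM('v) = 2 * n"
  shows "subspace W \<Longrightarrow> (\<forall>x\<in>W. \<forall>y\<in>W. w x y = 0) \<Longrightarrow> dim W \<le> n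
    \<Longrightarrow> \<exists>L. lagrangian n w L \<and> W \<subseteq> L"
proof (induction "n - dim W" arbitrary: W rule: less_induct)
  case (less W)
  from sw have bw: "bilinear w" and al: "\<forall>x. w x x = 0"
    unfolding symplectic_form_def by auto
  show ?case
  proof (cases "dim W = n")
    case True
    then show ?thesis using less.prems unfolding lagrangian_def by blast
  next
    case False
    then have lt: "dim W < n" using less.prems by simp
    define K where "K = {v. \<forall>u\<in>W. w u v = 0}"
    have dK: "dim K + dim W = 2 * n" using perp_dim[OF sw less.prems(1)] D K_def by simp
    have "\<not> K \<subseteq> W"
    proof
      assume "K \<subseteq> W"
      then have "dim K \<le> dim W" by (rule dim_subset)
      with dK lt show False by simp
    qed
    then obtain v where vK: "v \<in> K" and vW: "v \<notin> W" by blast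
    define W' where "W' = span (insert v W)"
    have vs: "v \<notin> span W" using vW less.prems(1) span_eq_iff by blast
    have dW': "dim W' = dim W + 1" unfolding W'_def using vs by (simp add: dim_insert)
    have iso0: "\<forall>x\<in>insert v W. \<forall>y\<in>insert v W. w x y = 0"
    proof (intro ballI)
      fix x y assume x: "x \<in> insert v W" and y: "y \<in> insert v W"
      have a: "w u v = 0" "w v u = 0" if "u \<in> W" for u
        using vK that antisym_form[OF bw al, of v u] unfolding K_def by auto
      show "w x y = 0"
        using x y a al less.prems(2) by auto
    qed
    have isoW': "\<forall>x\<in>W'. \<forall>y\<in>W'. w x y = 0"
      unfolding W'_def by (rule iso_span[OF bw iso0])
    have "\<exists>L. lagrangian n w L \<and> W' \<subseteq> L"
      by (rule less.hyps) (use dW' lt isoW' in \<open>auto simp: W'_def\<close>)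
    moreover have "W \<subseteq> W'" unfolding W'_def by (meson span_superset subset_insertI subset_trans)
    ultimately show ?thesis by blast
  qed
qed


theorem mainTheorem5:
  fixes \<omega> \<Omega> :: "'v::euclidean_space \<Rightarrow> 'v \<Rightarrow> real" and n :: nat
  assumes "DIM('v) = 2 * n"
    and "symplectic_form \<omega>" and "symplectic_form \<Omega>"
    and "{L. lagrangian n \<omega> L} = {L. lagrangian n \<Omega> L}"
  shows "\<exists>c::real. c \<noteq> 0 \<and> (\<forall>x y. \<Omega> x y = c * \<omega> x y)"
proof -
  note D = assms(1)
  from assms(2) have bw: "bilinear \<omega>" and alw: "\<forall>x. \<omega> x x = 0"
    and ndw: "\<And>x. (\<forall>y. \<omega> x y = 0) \<Longrightarrow> x = 0"
    unfolding symplectic_form_def by auto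
  from assms(3) have bW: "bilinear \<Omega>"
    and ndW: "\<And>x. (\<forall>y. \<Omega> x y = 0) \<Longrightarrow> x = 0"
    unfolding symplectic_form_def by auto
  obtain e :: 'v where eB: "e \<in> Basis" using nonempty_Basis by blast
  then have e0: "e \<noteq> 0" by auto
  have key: "\<Omega> x y = 0" if xy: "\<omega> x y = 0" for x y
  proof -
    define W where "W = span {x, y}"
    have sW: "subspace W" unfolding W_def by simp
    have iso0: "\<forall>a\<in>{x,y}. \<forall>b\<in>{x,y}. \<omega> a b = 0"
      using xy alw antisym_form[OF bw alw, of y x] by auto
    have isoW: "\<forall>a\<in>W. \<forall>b\<in>W. \<omega> a b = 0" unfolding W_def by (rule iso_span[OF bw iso0])
    have d2: "dim W \<le> 2"
    proof -
      have "dim W \<le> card {x, y}" unfolding W_def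
        by (rule dim_le_card) auto
      also have "\<dots> \<le> 2" by (simp add: card_insert_le_m1)
      finally show ?thesis .
    qed
    have dWn: "dim W \<le> n"
    proof (rule ccontr)
      assume "\<not> dim W \<le> n"
      then have "n \<le> 1" using d2 by simp
      moreover have "n \<ge> 1" using D DIM_positive[where 'a='v] by linarith
      ultimately have "dim W = DIM('v)" using d2 D \<open>\<not> dim W \<le> n\<close> by simp
      then have "span W = UNIV" using dim_eq_full by blast
      then have "W = UNIV" using sW span_eq_iff by blast
      then have "\<forall>b. \<omega> e b = 0" using isoW by auto
      with ndw e0 show False by blast
    qed
    obtain L where L: "lagrangian n \<omega> L" "W \<subseteq> L"
      using extend[OF assms(2) D sW isoW dWn] by blast
    then have "lagrangian n \<Omega> L" using assms(4) by blast
    moreover have "x \<in> L" "y \<in> L" using L(2) unfolding W_def by (auto intro: span_base)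
    ultimately show ?thesis unfolding lagrangian_def by blast
  qed
  obtain f0 where "\<omega> e f0 \<noteq> 0" using ndw e0 by blast
  define f where "f = (1 / \<omega> e f0) *\<^sub>R f0"
  have ef: "\<omega> e f = 1" unfolding f_def using \<open>\<omega> e f0 \<noteq> 0\<close> by (simp add: bilinear_rmul[OF bw])
  have L1: "\<Omega> a y = \<omega> a y * \<Omega> a b" if "\<omega> a b = 1" for a b y
  proof -
    have "\<omega> a (y - \<omega> a y *\<^sub>R b) = 0"
      using that by (simp add: bilinear_rsub[OF bw] bilinear_rmul[OF bw])
    then have "\<Omega> a (y - \<omega> a y *\<^sub>R b) = 0" by (rule key)
    then show ?thesis by (simp add: bilinear_rsub[OF bW] bilinear_rmul[OF bW])
  qed
  have L2: "\<Omega> x b = \<omega> x b * \<Omega> a b" if "\<omega> a b = 1" for a b x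
  proof -
    have "\<omega> (x - \<omega> x b *\<^sub>R a) b = 0"
      using that by (simp add: bilinear_lsub[OF bw] bilinear_lmul[OF bw])
    then have "\<Omega> (x - \<omega> x b *\<^sub>R a) b = 0" by (rule key)
    then show ?thesis by (simp add: bilinear_lsub[OF bW] bilinear_lmul[OF bW])
  qed
  define c where "c = \<Omega> e f"
  have L3: "\<Omega> a y = c * \<omega> a y" if "\<omega> a f = 1" for a y
    using L1[OF that, of y] L2[OF ef, of a] that unfolding c_def by simp
  have all: "\<Omega> x y = c * \<omega> x y" for x y
  proof (cases "\<omega> x f = 0")
    case False
    define k where "k = \<omega> x f"
    have "\<omega> ((1 / k) *\<^sub>R x) f = 1" using False unfolding k_def by (simp add: bilinear_lmul[OF bw])
    from L3[OF this, of y] have "(1 / k) * \<Omega> x y = c * ((1 / k) * \<omega> x y)"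
      by (simp add: bilinear_lmul[OF bw] bilinear_lmul[OF bW])
    then show ?thesis using False unfolding k_def by (simp add: field_simps)
  next
    case True
    have "\<omega> (x + e) f = 1" using True ef by (simp add: bilinear_ladd[OF bw])
    from L3[OF this, of y] L3[OF ef, of y] show ?thesis
      by (simp add: bilinear_ladd[OF bw] bilinear_ladd[OF bW] algebra_simps)
  qed
  have "c \<noteq> 0"
  proof
    assume "c = 0"
    then have "\<forall>y. \<Omega> e y = 0" using all by simp
    with ndW e0 show False by blast
  qed
  with all show ?thesis by blast
qed

end
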